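(* Assume the standing setting of the context. Let $(\varepsilon_k)_k$ be a positive sequence with $\varepsilon_k\to0$ and let $x^*(\varepsilon_k)$ be the unique Nash equilibrium of NEP($\varepsilon_k$). Then every accumulation point of $(x^*(\varepsilon_k))_k$ is a Nash equilibrium of the nonsmooth NEP, and therefore of the multi-leader-follower game.
   Context: Standing setting: $N\ge1$, $x=(x_1,\dots,x_N)\in\mathbb{R}^n$, $x_\nu\in\mathbb{R}^{n_\nu}$, $x_{-\nu}$ = all components other than $x_\nu$. For each $\nu$: $Q_\nu$ symmetric positive definite, $c_\nu\in\mathbb{R}^{n_\nu}$, $X_\nu=\{x_\nu:g_\nu(x_\nu)\le0\}$ nonempty, convex, closed with $g_\nu$ convex and at least twice differentiable; $X=X_1\times\dots\times X_N$; $a\in\mathbb{R}^m$, $a\ge0$; $Q_y\in\mathbb{R}^{m\times m}$ positive definite diagonal; $B,L\in\mathbb{R}^{n\times m}$. For $\varepsilon>0$, $\tilde\phi_\varepsilon:\mathbb{R}\to\mathbb{R}$ is convex and at least twice differentiable (applied componentwise), and $\phi_\varepsilon(\alpha,\beta)=\alpha+\beta-\tilde\phi_\varepsilon(\alpha-\beta)$ is a smooth NCP function continuous in $\varepsilon$, where at $\varepsilon=0$ it is the nonsmooth NCP function, i.e. $\tilde\phi_0(t)=|t|$ and $(t,\varepsilon)\mapsto\tilde\phi_\varepsilon(t)$ is continuous on $\mathbb{R}\times[0,\infty)$ (example: $\tilde\phi_\varepsilon(t)=\sqrt{t^2+4\varepsilon^2}$). NEP($\varepsilon$), $\varepsilon>0$: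 player $\nu$ solves $\min_{x_\nu\in X_\nu}\theta^\varepsilon_\nu(x)=\tfrac12 x_\nu^\top Q_\nu x_\nu+c_\nu^\top x_\nu+\tfrac12\sum_i a_i[(L^\top+Q_y^{-1}B^\top)x+\tilde\phi_\varepsilon((L^\top-Q_y^{-1}B^\top)x)]_i$; it has a unique Nash equilibrium $x^*(\varepsilon)$. Nonsmooth NEP: player $\nu$ solves $\min_{x_\nu\in X_\nu}\theta_\nu(x)=\tfrac12 x_\nu^\top Q_\nu x_\nu+c_\nu^\top x_\nu+\sum_i a_i\max\{(Q_y^{-1}B^\top x)_i,(L^\top x)_i\}$. It is equivalent to the multi-leader-follower game in which, given $x$, the follower solves $\min_y\tfrac12 y^\top Q_y y-(B^\top x)^\top y$ s.t. $y\ge L^\top x$ (unique solution $y(x)=\max\{Q_y^{-1}B^\top x,L^\top x\}$) and leader $\nu$ minimizes $\tfrac12 x_\nu^\top Q_\nu x_\nu+c_\nu^\top x_\nu+a^\top y(x)$ over $X_\nu$. A Nash equilibrium is $x^*\in X$ such that each $x^*_\nu$ minimizes player $\nu$'s objective over $X_\nu$ with $x_{-\nu}=x^*_{-\nu}$. *)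

theory Defs
  imports "HOL-Analysis.Analysis"
begin

text \<open>
Coordinates of the leaders' joint vector x are indexed by a finite type 'n; the map
blk :: 'n => 'p assigns each coordinate to its player (players = finite type 'p).
\<close>

definition blk_upd :: "('n \<Rightarrow> 'p) \<Rightarrow> 'p \<Rightarrow> real^'n \<Rightarrow> real^'n \<Rightarrow> real^'n" where
  "blk_upd blk \<nu> x z = (\<chi> i. if blk i = \<nu> then z $ i else x $ i)"

text \<open>x_nu in X_nu, where X_nu = {x_nu. g_nu(x_nu) <= 0}; the components of g_nu
are g nu j, j :: 'c, each depending on x only through the block x_nu.\<close>
definition feas :: "('p \<Rightarrow> 'c::finite \<Rightarrow> real^'n \<Rightarrow> real) \<Rightarrow> 'p \<Rightarrow> real^'n \<Rightarrow> bool" where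
  "feas g \<nu> x \<longleftrightarrow> (\<forall>j. g \<nu> j x \<le> 0)"

definition is_NE :: "('n \<Rightarrow> 'p) \<Rightarrow> ('p \<Rightarrow> 'c::finite \<Rightarrow> real^'n \<Rightarrow> real)
    \<Rightarrow> ('p \<Rightarrow> real^'n \<Rightarrow> real) \<Rightarrow> real^'n \<Rightarrow> bool" where
  "is_NE blk g \<theta> x \<longleftrightarrow> (\<forall>\<nu>. feas g \<nu> x) \<and>
     (\<forall>\<nu> z. feas g \<nu> z \<longrightarrow> \<theta> \<nu> x \<le> \<theta> \<nu> (blk_upd blk \<nu> x z))"

definition own_cost :: "('n \<Rightarrow> 'p) \<Rightarrow> ('p \<Rightarrow> real^'n^'n) \<Rightarrow> real^'n \<Rightarrow> 'p \<Rightarrow> real^'n \<Rightarrow> real" where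
  "own_cost blk Q c \<nu> x =
     (1/2) * (\<Sum>i\<in>{i. blk i = \<nu>}. \<Sum>j\<in>{j. blk j = \<nu>}. x $ i * (Q \<nu> $ i $ j) * x $ j)
     + (\<Sum>i\<in>{i. blk i = \<nu>}. c $ i * x $ i)"

text \<open>Q_y^{-1} B^T x, with Q_y = diag(qy).\<close>
definition wvec :: "real^'m \<Rightarrow> real^'m^'n \<Rightarrow> real^'n \<Rightarrow> real^'m" where
  "wvec qy B x = (\<chi> i. (transpose B *v x) $ i / qy $ i)"

definition theta_eps :: "('n \<Rightarrow> 'p) \<Rightarrow> ('p \<Rightarrow> real^'n^'n) \<Rightarrow> real^'n \<Rightarrow> real^'m \<Rightarrow> real^'m
    \<Rightarrow> real^'m^'n \<Rightarrow> real^'m^'n \<Rightarrow> (real \<Rightarrow> real \<Rightarrow> real) \<Rightarrow> real \<Rightarrow> 'p \<Rightarrow> real^'n \<Rightarrow> real" where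
  "theta_eps blk Q c a qy B L phi \<epsilon> \<nu> x =
     own_cost blk Q c \<nu> x +
     (1/2) * (\<Sum>i\<in>UNIV. a $ i * ((transpose L *v x) $ i + wvec qy B x $ i
                                 + phi \<epsilon> ((transpose L *v x) $ i - wvec qy B x $ i)))"

definition theta_ns :: "('n \<Rightarrow> 'p) \<Rightarrow> ('p \<Rightarrow> real^'n^'n) \<Rightarrow> real^'n \<Rightarrow> real^'m \<Rightarrow> real^'m
    \<Rightarrow> real^'m^'n \<Rightarrow> real^'m^'n \<Rightarrow> 'p \<Rightarrow> real^'n \<Rightarrow> real" where
  "theta_ns blk Q c a qy B L \<nu> x =
     own_cost blk Q c \<nu> x +
     (\<Sum>i\<in>UNIV. a $ i * max (wvec qy B x $ i) ((transpose L *v x) $ i))"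

definition follower_obj :: "real^'m \<Rightarrow> real^'m^'n \<Rightarrow> real^'n \<Rightarrow> real^'m \<Rightarrow> real" where
  "follower_obj qy B x y = (1/2) * (\<Sum>i\<in>UNIV. qy $ i * (y $ i)\<^sup>2) - (transpose B *v x) \<bullet> y"

definition follower_feas :: "real^'m^'n \<Rightarrow> real^'n \<Rightarrow> real^'m \<Rightarrow> bool" where
  "follower_feas L x y \<longleftrightarrow> (\<forall>i. (transpose L *v x) $ i \<le> y $ i)"

definition follower_sol :: "real^'m \<Rightarrow> real^'m^'n \<Rightarrow> real^'m^'n \<Rightarrow> real^'n \<Rightarrow> real^'m" where
  "follower_sol qy B L x = (THE y. follower_feas L x y \<and>
       (\<forall>y'. follower_feas L x y' \<longrightarrow> follower_obj qy B x y \<le> follower_obj qy B x y'))"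

definition theta_mlf :: "('n \<Rightarrow> 'p) \<Rightarrow> ('p \<Rightarrow> real^'n^'n) \<Rightarrow> real^'n \<Rightarrow> real^'m \<Rightarrow> real^'m
    \<Rightarrow> real^'m^'n \<Rightarrow> real^'m^'n \<Rightarrow> 'p \<Rightarrow> real^'n \<Rightarrow> real" where
  "theta_mlf blk Q c a qy B L \<nu> x = own_cost blk Q c \<nu> x + a \<bullet> follower_sol qy B L x"

end

theory Submission
  imports Defs
begin

lemma own_cost_tendsto:
  fixes y :: "nat \<Rightarrow> real^'n::finite"
  assumes "y \<longlonglongrightarrow> x"
  shows "(\<lambda>k. own_cost blk Q c \<nu> (y k)) \<longlonglongrightarrow> own_cost blk Q c \<nu> x"
  unfolding own_cost_def by (intro tendsto_intros assms)

lemma Ltx_tendsto: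
  fixes y :: "nat \<Rightarrow> real^'n::finite" and L :: "real^'m::finite^'n"
  assumes "y \<longlonglongrightarrow> x"
  shows "(\<lambda>k. (transpose L *v y k) $ i) \<longlonglongrightarrow> (transpose L *v x) $ i"
  unfolding matrix_vector_mult_def by (simp only: vec_lambda_beta) (intro tendsto_intros assms)

lemma wvec_tendsto:
  fixes y :: "nat \<Rightarrow> real^'n::finite" and B :: "real^'m::finite^'n"
  assumes "y \<longlonglongrightarrow> x"
  shows "(\<lambda>k. wvec qy B (y k) $ i) \<longlonglongrightarrow> wvec qy B x $ i"
  using tendsto_mult[OF Ltx_tendsto[OF assms, of B i] tendsto_const[of "1 / qy $ i"]]
  unfolding wvec_def by simp

lemma blk_upd_tendsto:
  assumes "y \<longlonglongrightarrow> x"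
  shows "(\<lambda>k. blk_upd blk \<nu> (y k) z) \<longlonglongrightarrow> blk_upd blk \<nu> x z"
  unfolding blk_upd_def
  by (intro vec_tendstoI) (auto intro: tendsto_vec_nth assms)

lemma theta_tendsto:
  fixes y :: "nat \<Rightarrow> real^'n::finite" and B L :: "real^'m::finite^'n"
  assumes y: "y \<longlonglongrightarrow> x" and e: "e \<longlonglongrightarrow> 0" and epos: "\<And>k. e k > 0"
    and phi_zero: "\<And>t. phi 0 t = \<bar>t\<bar>"
    and phi_cont: "continuous_on (UNIV \<times> {0..}) (\<lambda>(t, \<epsilon>). phi \<epsilon> t)"
  shows "(\<lambda>k. theta_eps blk Q c a qy B L phi (e k) \<nu> (y k)) \<longlonglongrightarrow> theta_ns blk Q c a qy B L \<nu> x"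
proof -
  have ph: "(\<lambda>k. phi (e k) (u k)) \<longlonglongrightarrow> \<bar>v\<bar>" if u: "u \<longlonglongrightarrow> v" for u v
  proof -
    have "(\<lambda>k. (\<lambda>(t, \<epsilon>). phi \<epsilon> t) (u k, e k)) \<longlonglongrightarrow> (\<lambda>(t, \<epsilon>). phi \<epsilon> t) (v, 0)"
      by (rule continuous_on_tendsto_compose[OF phi_cont]) 
         (auto intro!: tendsto_Pair u e simp: less_imp_le[OF epos])
    thus ?thesis by (simp add: phi_zero)
  qed
  have mx: "(1/2) * (u + w + \<bar>u - w\<bar>) = max w u" for u w :: real by auto
  have "(\<lambda>k. theta_eps blk Q c a qy B L phi (e k) \<nu> (y k)) \<longlonglongrightarrow>
     own_cost blk Q c \<nu> x +
     (1/2) * (\<Sum>i\<in>UNIV. a $ i * ((transpose L *v x) $ i + wvec qy B x $ i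
                                 + \<bar>(transpose L *v x) $ i - wvec qy B x $ i\<bar>))"
    unfolding theta_eps_def
    by (intro tendsto_intros own_cost_tendsto Ltx_tendsto wvec_tendsto ph y)
  also have "own_cost blk Q c \<nu> x +
     (1/2) * (\<Sum>i\<in>UNIV. a $ i * ((transpose L *v x) $ i + wvec qy B x $ i
                                 + \<bar>(transpose L *v x) $ i - wvec qy B x $ i\<bar>))
     = theta_ns blk Q c a qy B L \<nu> x"
    unfolding theta_ns_def sum_distrib_left
    by (intro arg_cong2[where f="(+)"] refl sum.cong) (auto simp: max_def)
  finally show ?thesis .
qed

lemma follower_sol_eq:
  fixes B L :: "real^'m::finite^'n::finite"
  assumes qy_pos: "\<And>i. qy $ i > 0"
  shows "follower_sol qy B L x = (\<chi> i. max (wvec qy B x $ i) ((transpose L *v x) $ i))"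
proof -
  define y0 where "y0 = (\<chi> i. max (wvec qy B x $ i) ((transpose L *v x) $ i))"
  have key: "follower_obj qy B x y - follower_obj qy B x y0 \<ge> (\<Sum>i\<in>UNIV. qy $ i / 2 * (y $ i - y0 $ i)^2)"
    if fy: "follower_feas L x y" for y
  proof -
    have comp: "qy $ i / 2 * (y $ i - y0 $ i)^2 \<le>
       ((1/2) * (qy $ i * (y $ i)^2) - (transpose B *v x) $ i * y $ i)
       - ((1/2) * (qy $ i * (y0 $ i)^2) - (transpose B *v x) $ i * y0 $ i)" for i
    proof -
      define q where "q = qy $ i"
      define w where "w = wvec qy B x $ i"
      define l where "l = (transpose L *v x) $ i"
      have q: "q > 0" using qy_pos q_def by simp
      have b: "(transpose B *v x) $ i = q * w" unfolding w_def q_def wvec_def using qy_pos[of i] by simp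
      have yl: "y $ i \<ge> l" using fy unfolding follower_feas_def l_def by simp
      have y0: "y0 $ i = max w l" unfolding y0_def w_def l_def by simp
      have "(y $ i - y0 $ i) * (y0 $ i - w) \<ge> 0"
        using yl y0 by (cases "w \<le> l") (auto simp: max_def)
      hence "q * ((y $ i - y0 $ i) * (y0 $ i - w)) \<ge> 0" using q by simp
      thus ?thesis unfolding b q_def[symmetric]
        by (simp add: power2_eq_square algebra_simps)
    qed
    have "(\<Sum>i\<in>UNIV. qy $ i / 2 * (y $ i - y0 $ i)^2) \<le> (\<Sum>i\<in>UNIV.
       ((1/2) * (qy $ i * (y $ i)^2) - (transpose B *v x) $ i * y $ i)
       - ((1/2) * (qy $ i * (y0 $ i)^2) - (transpose B *v x) $ i * y0 $ i))"
      by (intro sum_mono comp)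
    also have "\<dots> = follower_obj qy B x y - follower_obj qy B x y0"
      unfolding follower_obj_def inner_vec_def sum_subtractf sum_distrib_left
      by simp
    finally show ?thesis .
  qed
  have f0: "follower_feas L x y0" unfolding follower_feas_def y0_def by simp
  have nn: "(\<Sum>i\<in>UNIV. qy $ i / 2 * (y $ i - y0 $ i)^2) \<ge> 0" for y
    using qy_pos by (intro sum_nonneg) (metis less_imp_le mult_nonneg_nonneg zero_le_power2 divide_nonneg_pos zero_less_numeral)
  show ?thesis unfolding follower_sol_def y0_def[symmetric]
  proof (rule the_equality)
    show "follower_feas L x y0 \<and> (\<forall>y'. follower_feas L x y' \<longrightarrow> follower_obj qy B x y0 \<le> follower_obj qy B x y')"
      using f0 key nn by (meson diff_ge_0_iff_ge order_trans)
  next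
    fix y assume h: "follower_feas L x y \<and> (\<forall>y'. follower_feas L x y' \<longrightarrow> follower_obj qy B x y \<le> follower_obj qy B x y')"
    hence "(\<Sum>i\<in>UNIV. qy $ i / 2 * (y $ i - y0 $ i)^2) \<le> 0"
      using key[of y] f0 by fastforce
    hence "(\<Sum>i\<in>UNIV. qy $ i / 2 * (y $ i - y0 $ i)^2) = 0" using nn[of y] by linarith
    moreover have "\<forall>i\<in>UNIV. 0 \<le> qy $ i / 2 * (y $ i - y0 $ i)^2"
        using qy_pos by (metis less_imp_le mult_nonneg_nonneg zero_le_power2 divide_nonneg_pos zero_less_numeral)
    ultimately have "\<forall>i\<in>UNIV. qy $ i / 2 * (y $ i - y0 $ i)^2 = 0"
      using sum_nonneg_eq_0_iff[of UNIV "\<lambda>i. qy $ i / 2 * (y $ i - y0 $ i)^2"] by simp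
    thus "y = y0" using qy_pos unfolding vec_eq_iff by (metis less_irrefl divide_eq_0_iff mult_eq_0_iff power_eq_0_iff right_minus_eq zero_neq_numeral UNIV_I)
  qed
qed

lemma theta_mlf_eq:
  assumes "\<And>i. qy $ i > 0"
  shows "theta_mlf blk Q c a qy B L = theta_ns blk Q c a qy B L"
  unfolding theta_mlf_def theta_ns_def fun_eq_iff follower_sol_eq[OF assms] inner_vec_def
  by simp

theorem mainTheorem8:
  fixes blk :: "'n::finite \<Rightarrow> 'p::finite"
    and Q :: "'p \<Rightarrow> real^'n^'n" and c :: "real^'n"
    and g :: "'p \<Rightarrow> 'c::finite \<Rightarrow> real^'n \<Rightarrow> real"
    and a qy :: "real^'m::finite" and B L :: "real^'m^'n"
    and phi :: "real \<Rightarrow> real \<Rightarrow> real"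
    and eps :: "nat \<Rightarrow> real" and xs :: "nat \<Rightarrow> real^'n" and xbar :: "real^'n"
  assumes blocks_nonempty: "surj blk"
    and Q_sym: "\<And>\<nu> i j. blk i = \<nu> \<Longrightarrow> blk j = \<nu> \<Longrightarrow> Q \<nu> $ i $ j = Q \<nu> $ j $ i"
    and Q_pd: "\<And>\<nu> v. (\<exists>i. blk i = \<nu> \<and> v $ i \<noteq> 0) \<Longrightarrow>
        (\<Sum>i\<in>{i. blk i = \<nu>}. \<Sum>j\<in>{j. blk j = \<nu>}. v $ i * (Q \<nu> $ i $ j) * v $ j) > 0"
    and g_local: "\<And>\<nu> j x y. (\<forall>i. blk i = \<nu> \<longrightarrow> x $ i = y $ i) \<Longrightarrow> g \<nu> j x = g \<nu> j y"
    and g_convex: "\<And>\<nu> j. convex_on UNIV (g \<nu> j)"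
    and g_C2: "\<And>\<nu> j. \<exists>G. \<forall>x. (g \<nu> j has_derivative (\<lambda>h. G x \<bullet> h)) (at x) \<and> G differentiable (at x)"
    and X_nonempty: "\<And>\<nu>. \<exists>x. feas g \<nu> x"
    and a_nonneg: "\<And>i. a $ i \<ge> 0"
    and qy_pos: "\<And>i. qy $ i > 0"
    and phi_convex: "\<And>\<epsilon>. \<epsilon> > 0 \<Longrightarrow> convex_on UNIV (phi \<epsilon>)"
    and phi_C2: "\<And>\<epsilon>. \<epsilon> > 0 \<Longrightarrow> \<exists>d. \<forall>t. (phi \<epsilon> has_real_derivative d t) (at t) \<and> d differentiable (at t)"
    and phi_zero: "\<And>t. phi 0 t = \<bar>t\<bar>"
    and phi_cont: "continuous_on (UNIV \<times> {0..}) (\<lambda>(t, \<epsilon>). phi \<epsilon> t)"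
    and eps_pos: "\<And>k. eps k > 0"
    and eps_lim: "eps \<longlonglongrightarrow> 0"
    and xs_NE: "\<And>k. is_NE blk g (theta_eps blk Q c a qy B L phi (eps k)) (xs k)"
    and accum: "\<exists>r. strict_mono r \<and> (xs \<circ> r) \<longlonglongrightarrow> xbar"
  shows "is_NE blk g (theta_ns blk Q c a qy B L) xbar \<and>
         is_NE blk g (theta_mlf blk Q c a qy B L) xbar"
proof -
  obtain r where r: "strict_mono r" and xr: "(xs \<circ> r) \<longlonglongrightarrow> xbar" using accum by blast
  define y where "y = xs \<circ> r"
  define e where "e = eps \<circ> r"
  have y: "y \<longlonglongrightarrow> xbar" using xr y_def by simp
  have e: "e \<longlonglongrightarrow> 0" unfolding e_def by (rule LIMSEQ_subseq_LIMSEQ[OF eps_lim r])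
  have epos: "\<And>k. e k > 0" unfolding e_def using eps_pos by simp
  have yNE: "\<And>k. is_NE blk g (theta_eps blk Q c a qy B L phi (e k)) (y k)"
    unfolding y_def e_def using xs_NE by simp
  have gcont: "continuous_on UNIV (g \<nu> j)" for \<nu> j
  proof -
    obtain G where "\<forall>x. (g \<nu> j has_derivative (\<lambda>h. G x \<bullet> h)) (at x)" using g_C2 by blast
    hence "\<forall>x. isCont (g \<nu> j) x" using has_derivative_continuous by blast
    thus ?thesis by (simp add: continuous_at_imp_continuous_on)
  qed
  have feas: "feas g \<nu> xbar" for \<nu>
    unfolding feas_def
  proof
    fix j
    have "(\<lambda>k. g \<nu> j (y k)) \<longlonglongrightarrow> g \<nu> j xbar"
      by (rule continuous_on_tendsto_compose[OF gcont y]) auto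
    moreover have "\<forall>k. g \<nu> j (y k) \<le> 0" using yNE unfolding is_NE_def feas_def by blast
    ultimately show "g \<nu> j xbar \<le> 0" by (meson LIMSEQ_le_const2)
  qed
  have opt: "theta_ns blk Q c a qy B L \<nu> xbar \<le> theta_ns blk Q c a qy B L \<nu> (blk_upd blk \<nu> xbar z)"
    if fz: "feas g \<nu> z" for \<nu> z
  proof (rule LIMSEQ_le)
    show "(\<lambda>k. theta_eps blk Q c a qy B L phi (e k) \<nu> (y k)) \<longlonglongrightarrow> theta_ns blk Q c a qy B L \<nu> xbar"
      by (rule theta_tendsto[OF y e epos phi_zero phi_cont])
    show "(\<lambda>k. theta_eps blk Q c a qy B L phi (e k) \<nu> (blk_upd blk \<nu> (y k) z)) \<longlonglongrightarrow> theta_ns blk Q c a qy B L \<nu> (blk_upd blk \<nu> xbar z)"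
      by (rule theta_tendsto[OF blk_upd_tendsto[OF y] e epos phi_zero phi_cont])
    show "\<exists>N. \<forall>n\<ge>N. theta_eps blk Q c a qy B L phi (e n) \<nu> (y n) \<le> theta_eps blk Q c a qy B L phi (e n) \<nu> (blk_upd blk \<nu> (y n) z)"
      using yNE fz unfolding is_NE_def by blast
  qed
  have ns: "is_NE blk g (theta_ns blk Q c a qy B L) xbar"
    unfolding is_NE_def using feas opt by blast
  moreover have "theta_mlf blk Q c a qy B L = theta_ns blk Q c a qy B L"
    by (rule theta_mlf_eq[OF qy_pos])
  ultimately show ?thesis by simp
qed

end
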